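(* Let $\mathcal{G}$ be a quantitative concurrent graph game with $F$-expanded game $\mathcal{G}^\star$. (1) If $P$ is a Nash equilibrium profile with set of winners $W$, then every transition of $\mathsf{outcome}(P)$ is safe for $W$. (2) Let $(u,W)$ be a state of $\mathcal{G}^\star$, considered as the initial state. If $P$ is a profile whose outcome (from $(u,W)$) remains in $V\times W$ and takes only transitions that are safe for $W$, then the second-strike profile $\overline{P}$ is a Nash equilibrium.
   Context: A quantitative concurrent graph game is a tuple $\mathcal{G}=\langle \Omega, V, \{\mathsf{Act}_\alpha\}_{\alpha\in\Omega}, v_0, \delta, \mathsf{cost}, F\rangle$: finite players $\Omega$, finite states $V$, finite action sets $\mathsf{Act}_\alpha$ (all enabled everywhere), initial state $v_0$, transition function $\delta: V\times\prod_\alpha\mathsf{Act}_\alpha\to V$, cost function giving each transition a vector $(\mathsf{cost}_\alpha)_\alpha\in\mathbb{N}^\Omega$, and target sets $F_\alpha\subseteq V$. $\mathsf{cost}_\alpha$ of an outcome (sequence of consecutive transitions) is the $\alpha$-cost accumulated until $F_\alpha$ is first visited, $\infty$ if never. Strategies map histories to actions; profiles induce outcomes; a profile is a Nash equilibrium (NE) if no player can strictly lower its own cost by unilaterally changing its strategy. $C_\alpha(u)=\max_\sigma\min_\tau\mathsf{cost}_\alpha(\mathsf{outcome}_u(\sigma,\tau))$ (max over strategies of the coalition $\Omega\setminus\{\alpha\}$, min over strategies of $\alpha$, outcome starting at $u$). The $F$-expanded game $\mathcal{G}^\star$ has states $V\times 2^\Omega$, initial state $(v_0,\emptyset)$, the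 same actions, transitions $\delta^\star((v,S),\vec a)=(\delta(v,\vec a),S\cup\{\alpha: v\in F_\alpha\})$, costs $\mathsf{cost}^\star_\alpha((v,S),\vec a)=\mathsf{cost}_\alpha(v,\vec a)$ if $\alpha\notin S$ and $0$ if $\alpha\in S$, and targets $F^\star_\alpha=\{(v,S):\alpha\in S\}$; strategies, outcomes and profiles of $\mathcal{G}$ and $\mathcal{G}^\star$ correspond bijectively. The set of winners of a profile is the set of players $\alpha$ whose target is visited along its outcome. A transition $(x,\vec a,y)$ (of $\mathcal{G}$ or $\mathcal{G}^\star$) is safe for $W\subseteq\Omega$ if for every $\alpha\in\Omega\setminus W$ and every action vector $\vec b$ obtained from $\vec a$ by possibly changing the action of Player $\alpha$, the resulting transition $(x,\vec b,z)$ satisfies $C_\alpha(z)=\infty$. Second-strike profile $\overline{P}$ of $P$ with outcome $\pi$: each player follows $P$ while others follow $\pi$; once a player $\alpha$ deviates and a state $v'$ off $\pi$ is reached, the others play from $v'$ a fixed memoryless coalition strategy guaranteeing $\mathsf{cost}_\alpha\ge C_\alpha(w)$ from every state $w$. *)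

theory Defs
  imports Main "HOL-Library.Extended_Nat"
begin

text \<open>Players are the elements of a finite type 'p (this is Omega), states the
elements of a finite type 'v (this is V).  All per-player action sets live in a
common ambient type 'a; Act G alpha is the action set of player alpha.\<close>

record ('p, 'v, 'a) cgame =
  Act   :: "'p \<Rightarrow> 'a set"
  delta :: "'v \<Rightarrow> ('p \<Rightarrow> 'a) \<Rightarrow> 'v"
  cst   :: "'v \<Rightarrow> ('p \<Rightarrow> 'a) \<Rightarrow> 'p \<Rightarrow> nat"
  tgt   :: "'p \<Rightarrow> 'v set"

definition wf_game :: "('p, 'v, 'a) cgame \<Rightarrow> bool" where
  "wf_game G \<longleftrightarrow> (\<forall>\<alpha>. finite (Act G \<alpha>) \<and> Act G \<alpha> \<noteq> {})"

text \<open>A history: a start state together with the list of action vectors played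
so far (the visited states are determined by delta).\<close>

type_synonym ('v, 'p, 'a) history = "'v \<times> ('p \<Rightarrow> 'a) list"
type_synonym ('v, 'p, 'a) strategy = "('v, 'p, 'a) history \<Rightarrow> 'a"
type_synonym ('v, 'p, 'a) profile = "'p \<Rightarrow> ('v, 'p, 'a) strategy"

definition hstate :: "('p, 'v, 'a) cgame \<Rightarrow> ('v, 'p, 'a) history \<Rightarrow> 'v" where
  "hstate G h = foldl (delta G) (fst h) (snd h)"

fun hist :: "('v, 'p, 'a) profile \<Rightarrow> 'v \<Rightarrow> nat \<Rightarrow> ('p \<Rightarrow> 'a) list" where
  "hist P u 0 = []"
| "hist P u (Suc n) = hist P u n @ [(\<lambda>\<alpha>. P \<alpha> (u, hist P u n))]"

definition oact :: "('v, 'p, 'a) profile \<Rightarrow> 'v \<Rightarrow> nat \<Rightarrow> ('p \<Rightarrow> 'a)" where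
  "oact P u n = (\<lambda>\<alpha>. P \<alpha> (u, hist P u n))"

definition ostate :: "('p, 'v, 'a) cgame \<Rightarrow> ('v, 'p, 'a) profile \<Rightarrow> 'v \<Rightarrow> nat \<Rightarrow> 'v" where
  "ostate G P u n = hstate G (u, hist P u n)"

text \<open>The n-th transition of the outcome of P from u is
  (ostate G P u n, oact P u n, ostate G P u (Suc n)).\<close>

definition ocost :: "('p, 'v, 'a) cgame \<Rightarrow> ('v, 'p, 'a) profile \<Rightarrow> 'v \<Rightarrow> 'p \<Rightarrow> enat" where
  "ocost G P u \<alpha> =
     (if \<exists>n. ostate G P u n \<in> tgt G \<alpha>
      then enat (\<Sum>i < (LEAST n. ostate G P u n \<in> tgt G \<alpha>).
                    cst G (ostate G P u i) (oact P u i) \<alpha>)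
      else \<infinity>)"

definition is_strategy :: "('p, 'v, 'a) cgame \<Rightarrow> 'p \<Rightarrow> ('v, 'p, 'a) strategy \<Rightarrow> bool" where
  "is_strategy G \<alpha> s \<longleftrightarrow> (\<forall>h. s h \<in> Act G \<alpha>)"

definition is_profile :: "('p, 'v, 'a) cgame \<Rightarrow> ('v, 'p, 'a) profile \<Rightarrow> bool" where
  "is_profile G P \<longleftrightarrow> (\<forall>\<alpha>. is_strategy G \<alpha> (P \<alpha>))"

definition nash :: "('p, 'v, 'a) cgame \<Rightarrow> 'v \<Rightarrow> ('v, 'p, 'a) profile \<Rightarrow> bool" where
  "nash G v0 P \<longleftrightarrow> is_profile G P \<and>
     (\<forall>\<alpha> \<sigma>. is_strategy G \<alpha> \<sigma> \<longrightarrow> ocost G P v0 \<alpha> \<le> ocost G (P(\<alpha> := \<sigma>)) v0 \<alpha>)"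

text \<open>C_alpha(u): sup over coalition strategies (profiles whose alpha-component is
ignored) of inf over strategies of alpha.\<close>

definition Cval :: "('p, 'v, 'a) cgame \<Rightarrow> 'p \<Rightarrow> 'v \<Rightarrow> enat" where
  "Cval G \<alpha> u = (SUP P \<in> {P. is_profile G P}. INF \<tau> \<in> {\<tau>. is_strategy G \<alpha> \<tau>}.
                    ocost G (P(\<alpha> := \<tau>)) u \<alpha>)"

definition winners :: "('p, 'v, 'a) cgame \<Rightarrow> ('v, 'p, 'a) profile \<Rightarrow> 'v \<Rightarrow> 'p set" where
  "winners G P v0 = {\<alpha>. \<exists>n. ostate G P v0 n \<in> tgt G \<alpha>}"

definition safe :: "('p, 'v, 'a) cgame \<Rightarrow> 'p set \<Rightarrow> 'v \<Rightarrow> ('p \<Rightarrow> 'a) \<Rightarrow> bool" where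
  "safe G W x a \<longleftrightarrow>
     (\<forall>\<alpha>. \<alpha> \<notin> W \<longrightarrow> (\<forall>b. (\<forall>\<beta>. \<beta> \<noteq> \<alpha> \<longrightarrow> b \<beta> = a \<beta>) \<longrightarrow> b \<alpha> \<in> Act G \<alpha> \<longrightarrow>
        Cval G \<alpha> (delta G x b) = \<infinity>))"

definition expand :: "('p, 'v, 'a) cgame \<Rightarrow> ('p, 'v \<times> 'p set, 'a) cgame" where
  "expand G = \<lparr> Act = Act G,
                delta = (\<lambda>(v, S) a. (delta G v a, S \<union> {\<alpha>. v \<in> tgt G \<alpha>})),
                cst = (\<lambda>(v, S) a \<alpha>. if \<alpha> \<in> S then 0 else cst G v a \<alpha>),
                tgt = (\<lambda>\<alpha>. {(v, S). \<alpha> \<in> S}) \<rparr>"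

text \<open>pun alpha is a memoryless coalition strategy (pun alpha beta w is the action of
beta at state w when punishing alpha) guaranteeing cost_alpha >= C_alpha(w)
from every state w.\<close>

definition punishing :: "('p, 'v, 'a) cgame \<Rightarrow> ('p \<Rightarrow> 'p \<Rightarrow> 'v \<Rightarrow> 'a) \<Rightarrow> bool" where
  "punishing G pun \<longleftrightarrow>
     (\<forall>\<alpha> \<beta> w. \<beta> \<noteq> \<alpha> \<longrightarrow> pun \<alpha> \<beta> w \<in> Act G \<beta>) \<and>
     (\<forall>\<alpha> w \<tau>. is_strategy G \<alpha> \<tau> \<longrightarrow>
        Cval G \<alpha> w \<le> ocost G ((\<lambda>\<beta> h. pun \<alpha> \<beta> (hstate G h))(\<alpha> := \<tau>)) w \<alpha>)"

text \<open>Q is a second-strike profile of P (initial state s0) w.r.t. the punishing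
strategies pun: along the outcome pi of P it plays P; once player alpha alone has
deviated from pi (first divergence at round k), every other player plays the
punishing strategy against alpha at the current state.\<close>

definition second_strike ::
  "('p, 'v, 'a) cgame \<Rightarrow> 'v \<Rightarrow> ('v, 'p, 'a) profile \<Rightarrow> ('p \<Rightarrow> 'p \<Rightarrow> 'v \<Rightarrow> 'a)
     \<Rightarrow> ('v, 'p, 'a) profile \<Rightarrow> bool" where
  "second_strike G s0 P pun Q \<longleftrightarrow>
     is_profile G Q \<and>
     (\<forall>n \<beta>. Q \<beta> (s0, hist P s0 n) = P \<beta> (s0, hist P s0 n)) \<and>
     (\<forall>k \<alpha> b rest \<beta>. (\<forall>\<gamma>. \<gamma> \<noteq> \<alpha> \<longrightarrow> b \<gamma> = oact P s0 k \<gamma>) \<longrightarrow> b \<alpha> \<noteq> oact P s0 k \<alpha> \<longrightarrow>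
        \<beta> \<noteq> \<alpha> \<longrightarrow>
        Q \<beta> (s0, hist P s0 k @ [b] @ rest) = pun \<alpha> \<beta> (hstate G (s0, hist P s0 k @ [b] @ rest)))"

end

theory Submission
  imports Defs
begin

lemma length_hist[simp]: "length (hist P u n) = n" by (induct n) auto

lemma hstate_app: "hstate G (s, xs @ ys) = hstate G (hstate G (s, xs), ys)"
  by (simp add: hstate_def)

lemma hstate_nil[simp]: "hstate G (s, []) = s" by (simp add: hstate_def)

lemma hstate_snoc: "hstate G (s, xs @ [b]) = delta G (hstate G (s, xs)) b"
  by (simp add: hstate_def)

lemma ocost_inf: "ocost G P u \<alpha> = \<infinity> \<longleftrightarrow> (\<forall>n. ostate G P u n \<notin> tgt G \<alpha>)"
  by (auto simp: ocost_def)

lemma hist_agree: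
  assumes "\<forall>k<m. \<forall>\<beta>. R \<beta> (s, hist P s k) = P \<beta> (s, hist P s k)"
  shows "k \<le> m \<Longrightarrow> hist R s k = hist P s k"
proof (induct k)
  case (Suc k)
  then have "hist R s k = hist P s k" by simp
  moreover have "(\<lambda>\<beta>. R \<beta> (s, hist P s k)) = (\<lambda>\<beta>. P \<beta> (s, hist P s k))"
    using assms Suc.prems by auto
  ultimately show ?case by simp
qed simp

lemma hist_splice:
  assumes "hist R s m = pre" "\<forall>rest \<beta>. R \<beta> (s, pre @ rest) = P' \<beta> (w, rest)"
  shows "hist R s (m + j) = pre @ hist P' w j"
  by (induct j) (simp_all add: assms)

lemma ostate_splice:
  "hist R s (m + j) = pre @ hist P' w j \<Longrightarrow> hstate G (s, pre) = w
   \<Longrightarrow> ostate G R s (m + j) = ostate G P' w j"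
  by (simp add: ostate_def hstate_app)

lemma part1:
  fixes G :: "('p, 'v, 'a) cgame" and P :: "('v, 'p, 'a) profile"
  assumes nash: "nash G v0 P" and aW: "\<alpha> \<notin> winners G P v0"
    and bo: "\<forall>\<beta>. \<beta> \<noteq> \<alpha> \<longrightarrow> b \<beta> = oact P v0 n \<beta>" and bA: "b \<alpha> \<in> Act G \<alpha>"
  shows "Cval G \<alpha> (delta G (ostate G P v0 n) b) = \<infinity>"
proof (rule ccontr)
  define z where "z = delta G (ostate G P v0 n) b"
  assume "Cval G \<alpha> (delta G (ostate G P v0 n) b) \<noteq> \<infinity>"
  hence Cz: "Cval G \<alpha> z < \<infinity>" using z_def using enat_ord_simps(4) by blast
  have prof: "is_profile G P" using nash by (simp add: nash_def)
  define P' where "P' = (\<lambda>\<beta> (h::('v, 'p, 'a) history). P \<beta> (v0, hist P v0 n @ [b] @ snd h))"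
  have P'p: "is_profile G P'" using prof by (simp add: P'_def is_profile_def is_strategy_def)
  have "(INF \<tau> \<in> {\<tau>. is_strategy G \<alpha> \<tau>}. ocost G (P'(\<alpha> := \<tau>)) z \<alpha>) \<le> Cval G \<alpha> z"
    unfolding Cval_def using P'p by (intro SUP_upper) auto
  with Cz have "(INF \<tau> \<in> {\<tau>. is_strategy G \<alpha> \<tau>}. ocost G (P'(\<alpha> := \<tau>)) z \<alpha>) < \<infinity>" by (meson le_less_trans)
  then have "\<exists>\<tau>\<in>{\<tau>. is_strategy G \<alpha> \<tau>}. ocost G (P'(\<alpha> := \<tau>)) z \<alpha> < \<infinity>"
    by (simp only: INF_less_iff)
  then obtain \<tau> where \<tau>s: "is_strategy G \<alpha> \<tau>" and \<tau>c: "ocost G (P'(\<alpha> := \<tau>)) z \<alpha> < \<infinity>"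
    by blast
  then obtain j where j: "ostate G (P'(\<alpha> := \<tau>)) z j \<in> tgt G \<alpha>"
    using ocost_inf[of G "P'(\<alpha> := \<tau>)" z \<alpha>] by auto
  define \<sigma> where "\<sigma> = (\<lambda>h. if h = (v0, hist P v0 n) then b \<alpha>
      else if (\<exists>r. h = (v0, hist P v0 n @ [b] @ r)) then \<tau> (z, drop (Suc n) (snd h)) else P \<alpha> h)"
  have \<sigma>s: "is_strategy G \<alpha> \<sigma>" using bA \<tau>s prof
    by (auto simp: \<sigma>_def is_strategy_def is_profile_def)
  define R where "R = P(\<alpha> := \<sigma>)"
  have agree: "\<forall>k<n. \<forall>\<beta>. R \<beta> (v0, hist P v0 k) = P \<beta> (v0, hist P v0 k)"
  proof (intro allI impI)
    fix k \<beta> assume "k < n"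
    then have "hist P v0 k \<noteq> hist P v0 n" "\<forall>r. hist P v0 k \<noteq> hist P v0 n @ [b] @ r"
      by (auto dest!: arg_cong[of _ _ length])
    then show "R \<beta> (v0, hist P v0 k) = P \<beta> (v0, hist P v0 k)"
      by (auto simp: R_def \<sigma>_def)
  qed
  have hn: "hist R v0 n = hist P v0 n" using hist_agree[OF agree] by simp
  have bR: "(\<lambda>\<beta>. R \<beta> (v0, hist P v0 n)) = b"
    using bo by (auto simp: R_def \<sigma>_def oact_def)
  have hSn: "hist R v0 (Suc n) = hist P v0 n @ [b]" using hn bR by simp
  have spl: "\<forall>rest \<beta>. R \<beta> (v0, (hist P v0 n @ [b]) @ rest) = (P'(\<alpha> := \<tau>)) \<beta> (z, rest)"
  proof (intro allI)
    fix rest \<beta>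
    have "hist P v0 n @ b # rest \<noteq> hist P v0 n"
      by simp
    then show "R \<beta> (v0, (hist P v0 n @ [b]) @ rest) = (P'(\<alpha> := \<tau>)) \<beta> (z, rest)"
      by (auto simp: R_def \<sigma>_def P'_def)
  qed
  have hz: "hstate G (v0, hist P v0 n @ [b]) = z"
    by (simp add: hstate_snoc z_def ostate_def)
  have "ostate G R v0 (Suc n + j) = ostate G (P'(\<alpha> := \<tau>)) z j"
    using ostate_splice[OF hist_splice[OF hSn spl] hz] .
  with j have "ocost G R v0 \<alpha> \<noteq> \<infinity>" using ocost_inf by metis
  moreover have "ocost G P v0 \<alpha> = \<infinity>" using aW by (simp add: ocost_inf winners_def)
  moreover have "ocost G P v0 \<alpha> \<le> ocost G R v0 \<alpha>" using nash \<sigma>s by (simp add: nash_def R_def)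
  ultimately show False by simp
qed

lemma Act_expand[simp]: "Act (expand G) = Act G" by (simp add: expand_def)
lemma tgt_expand[simp]: "tgt (expand G) \<alpha> = {(v, S). \<alpha> \<in> S}" by (simp add: expand_def)

lemma part2:
  fixes G :: "('p, 'v, 'a) cgame" and P :: "('v \<times> 'p set, 'p, 'a) profile"
  assumes sndW: "\<forall>n. snd (ostate (expand G) P (u, W) n) = W"
    and sf: "\<forall>n. safe (expand G) W (ostate (expand G) P (u, W) n) (oact P (u, W) n)"
    and pun: "punishing (expand G) pun"
    and ss: "second_strike (expand G) (u, W) P pun Q"
  shows "nash (expand G) (u, W) Q"
proof -
  define E where "E = expand G"
  define s0 where "s0 = (u, W)"
  note defs = E_def[symmetric] s0_def[symmetric]
  have Qp: "is_profile E Q" using ss by (simp add: second_strike_def defs)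
  have QP: "\<forall>n \<beta>. Q \<beta> (s0, hist P s0 n) = P \<beta> (s0, hist P s0 n)"
    using ss by (simp add: second_strike_def defs)
  have QS: "\<And>k \<alpha> b rest \<beta>. (\<forall>\<gamma>. \<gamma> \<noteq> \<alpha> \<longrightarrow> b \<gamma> = oact P s0 k \<gamma>) \<Longrightarrow> b \<alpha> \<noteq> oact P s0 k \<alpha> \<Longrightarrow>
        \<beta> \<noteq> \<alpha> \<Longrightarrow>
        Q \<beta> (s0, hist P s0 k @ [b] @ rest) = pun \<alpha> \<beta> (hstate E (s0, hist P s0 k @ [b] @ rest))"
    using ss unfolding second_strike_def defs by blast
  have sndW': "\<And>n. snd (ostate E P s0 n) = W" using sndW by (simp add: defs)
  have sf': "\<And>n. safe E W (ostate E P s0 n) (oact P s0 n)" using sf by (simp add: defs)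
  have pun': "punishing E pun" using pun by (simp add: defs)
  have hQ: "hist Q s0 n = hist P s0 n" for n
  proof -
    have "\<forall>k<Suc n. \<forall>\<beta>. Q \<beta> (s0, hist P s0 k) = P \<beta> (s0, hist P s0 k)" using QP by blast
    then show ?thesis using hist_agree[of "Suc n" Q s0 P n] by simp
  qed
  have "ocost E Q s0 \<alpha> \<le> ocost E (Q(\<alpha> := \<sigma>)) s0 \<alpha>" if \<sigma>s: "is_strategy E \<alpha> \<sigma>" for \<alpha> \<sigma>
  proof (cases "\<alpha> \<in> W")
    case True
    have t: "ostate E Q s0 0 \<in> tgt E \<alpha>" using True by (simp add: ostate_def s0_def E_def)
    have ex: "\<exists>n. ostate E Q s0 n \<in> tgt E \<alpha>" using t by blast
    have "(LEAST n. ostate E Q s0 n \<in> tgt E \<alpha>) = 0" using t by (simp add: Least_eq_0)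
    then have "ocost E Q s0 \<alpha> = 0" using ex by (simp add: ocost_def zero_enat_def)
    then show ?thesis by simp
  next
    case False
    have notP: "ostate E P s0 n \<notin> tgt E \<alpha>" for n
      using sndW'[of n] False by (cases "ostate E P s0 n") (simp add: E_def)
    have Qinf: "ocost E Q s0 \<alpha> = \<infinity>" using notP by (simp add: ocost_inf ostate_def hQ)
    define R where "R = Q(\<alpha> := \<sigma>)"
    have "\<forall>n. ostate E R s0 n \<notin> tgt E \<alpha>"
    proof (cases "\<forall>k. \<sigma> (s0, hist P s0 k) = P \<alpha> (s0, hist P s0 k)")
      case True
      then have "hist R s0 n = hist P s0 n" for n
        using hist_agree[of "Suc n" R s0 P n] QP by (simp add: R_def)
      then show ?thesis using notP by (simp add: ostate_def)
    next
      case False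
      define k where "k = (LEAST k. \<sigma> (s0, hist P s0 k) \<noteq> P \<alpha> (s0, hist P s0 k))"
      have kd: "\<sigma> (s0, hist P s0 k) \<noteq> P \<alpha> (s0, hist P s0 k)"
        using False unfolding k_def by (metis (mono_tags, lifting) LeastI)
      have agree: "\<forall>k'<k. \<forall>\<beta>. R \<beta> (s0, hist P s0 k') = P \<beta> (s0, hist P s0 k')"
        using not_less_Least[of _ "\<lambda>k. \<sigma> (s0, hist P s0 k) \<noteq> P \<alpha> (s0, hist P s0 k)"] QP
        unfolding k_def R_def by auto
      have hk: "\<And>k'. k' \<le> k \<Longrightarrow> hist R s0 k' = hist P s0 k'" using hist_agree[OF agree] by blast
      define b where "b = (\<lambda>\<beta>. R \<beta> (s0, hist P s0 k))"
      have bo: "\<forall>\<gamma>. \<gamma> \<noteq> \<alpha> \<longrightarrow> b \<gamma> = oact P s0 k \<gamma>" using QP by (simp add: b_def R_def oact_def)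
      have bd: "b \<alpha> \<noteq> oact P s0 k \<alpha>" using kd by (simp add: b_def R_def oact_def)
      have bA: "b \<alpha> \<in> Act E \<alpha>" using \<sigma>s unfolding is_strategy_def b_def R_def by (simp del: split_paired_All)
      define w where "w = delta E (ostate E P s0 k) b"
      have Cw: "Cval E \<alpha> w = \<infinity>" using sf'[of k] False bo bA \<open>\<alpha> \<notin> W\<close>
        unfolding safe_def w_def by blast
      define \<tau> where "\<tau> = (\<lambda>h::('v \<times> 'p set, 'p, 'a) history. \<sigma> (s0, hist P s0 k @ [b] @ snd h))"
      have \<tau>s: "is_strategy E \<alpha> \<tau>" using \<sigma>s unfolding is_strategy_def \<tau>_def by blast
      define Pn where "Pn = ((\<lambda>\<beta> h. pun \<alpha> \<beta> (hstate E h))(\<alpha> := \<tau>))"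
      have "Cval E \<alpha> w \<le> ocost E Pn w \<alpha>" using pun' \<tau>s unfolding punishing_def Pn_def by blast
      then have "ocost E Pn w \<alpha> = \<infinity>" using Cw by simp
      then have notPn: "\<And>j. ostate E Pn w j \<notin> tgt E \<alpha>" by (simp add: ocost_inf)
      have hSk: "hist R s0 (Suc k) = hist P s0 k @ [b]" using hk[of k] by (simp add: b_def)
      have hw: "hstate E (s0, hist P s0 k @ [b]) = w"
        by (simp add: hstate_snoc w_def ostate_def)
      have spl: "\<forall>rest \<beta>. R \<beta> (s0, (hist P s0 k @ [b]) @ rest) = Pn \<beta> (w, rest)"
      proof (intro allI)
        fix rest \<beta>
        show "R \<beta> (s0, (hist P s0 k @ [b]) @ rest) = Pn \<beta> (w, rest)"
        proof (cases "\<beta> = \<alpha>")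
          case True then show ?thesis by (simp add: R_def Pn_def \<tau>_def)
        next
          case False
          then have "R \<beta> (s0, (hist P s0 k @ [b]) @ rest) = pun \<alpha> \<beta> (hstate E (s0, hist P s0 k @ [b] @ rest))"
            using QS[OF bo bd False] by (simp add: R_def)
          also have "hstate E (s0, hist P s0 k @ [b] @ rest) = hstate E (w, rest)"
            using hstate_app[of E s0 "hist P s0 k @ [b]" rest] hw by simp
          finally show ?thesis using False by (simp add: Pn_def)
        qed
      qed
      show ?thesis
      proof
        fix n
        show "ostate E R s0 n \<notin> tgt E \<alpha>"
        proof (cases "n \<le> k")
          case True then show ?thesis using hk[OF True] notP[of n] by (simp add: ostate_def)
        next
          case False
          then obtain j where nj: "n = Suc k + j" by (metis add_Suc less_imp_Suc_add not_le)
          show ?thesis using ostate_splice[OF hist_splice[OF hSk spl] hw] notPn[of j] nj by simp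
        qed
      qed
    qed
    then have "ocost E R s0 \<alpha> = \<infinity>" by (rule ocost_inf[THEN iffD2])
    then show ?thesis using Qinf by (simp add: R_def)
  qed
  then show ?thesis using Qp by (simp add: nash_def defs)
qed

theorem lemma2:
  fixes G :: "('p::finite, 'v::finite, 'a) cgame" and v0 :: 'v
  assumes "wf_game G"
  shows "(\<forall>P W. nash G v0 P \<and> W = winners G P v0 \<longrightarrow>
            (\<forall>n. safe G W (ostate G P v0 n) (oact P v0 n)))
       \<and> (\<forall>u W P pun Q.
            is_profile (expand G) P \<and>
            (\<forall>n. snd (ostate (expand G) P (u, W) n) = W) \<and>
            (\<forall>n. safe (expand G) W (ostate (expand G) P (u, W) n) (oact P (u, W) n)) \<and>
            punishing (expand G) pun \<and>
            second_strike (expand G) (u, W) P pun Q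
            \<longrightarrow> nash (expand G) (u, W) Q)"
proof (intro conjI allI impI)
  fix P W n
  assume h: "nash G v0 P \<and> W = winners G P v0"
  show "safe G W (ostate G P v0 n) (oact P v0 n)"
    unfolding safe_def using h part1[of G v0 P] by blast
next
  fix u W P pun Q
  assume "is_profile (expand G) P \<and>
            (\<forall>n. snd (ostate (expand G) P (u, W) n) = W) \<and>
            (\<forall>n. safe (expand G) W (ostate (expand G) P (u, W) n) (oact P (u, W) n)) \<and>
            punishing (expand G) pun \<and>
            second_strike (expand G) (u, W) P pun Q"
  then show "nash (expand G) (u, W) Q" using part2[of G P u W pun Q] by blast
qed

end
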